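(* Let $k\ge 3$ be an integer. Let $n=k(k+1)+2$ and let $Z_k$ be the $k$-path power with $k$-path layout $\langle v_1,\ldots,v_n\rangle$. Let $m=(2k-1)(k+1)+1$, let $J_k$ be the $k$-path power with $k$-path layout $\langle z_1,\ldots,z_m\rangle$, and let $g=k^2-1$. Then every proper induced subgraph of $Z_k$ is isomorphic to an induced subgraph of $J_k-z_g$.
   Context: For an integer $k\ge 1$ and an ordering $\langle x_1,\ldots,x_n\rangle$ of $n$ vertices, the $k$-path power with $k$-path layout $\langle x_1,\ldots,x_n\rangle$ is the graph on $\{x_1,\ldots,x_n\}$ in which, for $i<j$, $x_i$ and $x_j$ are adjacent if and only if $j-i\le k$. $J_k-z_g$ denotes $J_k$ with the vertex $z_g$ deleted. A proper induced subgraph is an induced subgraph on a proper subset of the vertex set. *)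

theory Defs
  imports Main
begin

text \<open>The k-path power with k-path layout x_1,...,x_n is modelled on the vertex
  set {1..n} (vertex i standing for x_i): for i < j, i and j are adjacent
  iff j - i \<le> k.\<close>

definition path_power_adj :: "nat \<Rightarrow> nat \<Rightarrow> nat \<Rightarrow> bool" where
  "path_power_adj k i j \<longleftrightarrow> (i < j \<and> j - i \<le> k) \<or> (j < i \<and> i - j \<le> k)"

definition iso_to_induced_subgraph ::
  "'a set \<Rightarrow> ('a \<Rightarrow> 'a \<Rightarrow> bool) \<Rightarrow> 'b set \<Rightarrow> ('b \<Rightarrow> 'b \<Rightarrow> bool) \<Rightarrow> bool" where
  "iso_to_induced_subgraph V1 E1 V2 E2 \<longleftrightarrow>
     (\<exists>f. inj_on f V1 \<and> f ` V1 \<subseteq> V2 \<and>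
          (\<forall>u\<in>V1. \<forall>v\<in>V1. E1 u v \<longleftrightarrow> E2 (f u) (f v)))"

end

theory Submission
  imports Defs
begin

theorem mainTheorem2:
  fixes k n m g :: nat
  assumes "k \<ge> 3"
    and "n = k * (k + 1) + 2"
    and "m = (2 * k - 1) * (k + 1) + 1"
    and "g = k ^ 2 - 1"
  shows "\<forall>S. S \<subset> {1..n} \<longrightarrow>
           iso_to_induced_subgraph S (path_power_adj k) ({1..m} - {g}) (path_power_adj k)"
proof (intro allI impI)
  fix S assume S: "S \<subset> {1..n}"
  define K where "K = k * k"
  have K3: "K \<ge> 3 * k" unfolding K_def using assms(1) by (simp add: mult_le_mono)
  have gK: "g = K - 1" using assms(4) by (simp add: K_def power2_eq_square)
  have nK: "n = K + k + 2" using assms(2) by (simp add: K_def algebra_simps)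
  have "(2 * k - 1) * (k + 1) = 2 * K + k - 1"
    using assms(1) by (simp add: K_def algebra_simps diff_mult_distrib)
  hence mK: "m = 2 * K + k" using assms(3) assms(1) by simp
  obtain v where v: "v \<in> {1..n}" "v \<notin> S" using S by blast
  have Ssub: "S \<subseteq> {1..n}" using S by blast
  show "iso_to_induced_subgraph S (path_power_adj k) ({1..m} - {g}) (path_power_adj k)"
    unfolding iso_to_induced_subgraph_def
  proof (cases "v \<le> g")
    case True
    show "\<exists>f. inj_on f S \<and> f ` S \<subseteq> {1..m} - {g} \<and>
      (\<forall>u\<in>S. \<forall>w\<in>S. path_power_adj k u w = path_power_adj k (f u) (f w))"
    proof (intro exI conjI)
      show "inj_on (\<lambda>i. i + (g - v)) S" by (simp add: inj_on_def)
      show "(\<lambda>i. i + (g - v)) ` S \<subseteq> {1..m} - {g}"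
      proof
        fix x assume "x \<in> (\<lambda>i. i + (g - v)) ` S"
        then obtain i where i: "i \<in> S" "x = i + (g - v)" by blast
        have "i \<in> {1..n}" "i \<noteq> v" using i Ssub v by auto
        thus "x \<in> {1..m} - {g}" using i True gK nK mK K3 v by auto
      qed
      show "\<forall>u\<in>S. \<forall>w\<in>S. path_power_adj k u w = path_power_adj k (u + (g - v)) (w + (g - v))"
        by (auto simp: path_power_adj_def)
    qed
  next
    case False
    show "\<exists>f. inj_on f S \<and> f ` S \<subseteq> {1..m} - {g} \<and>
      (\<forall>u\<in>S. \<forall>w\<in>S. path_power_adj k u w = path_power_adj k (f u) (f w))"
    proof (intro exI conjI)
      have le: "\<And>i. i \<in> S \<Longrightarrow> i \<le> g + v"
      proof -
        fix i assume "i \<in> S"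
        hence "i \<le> n" using Ssub by auto
        thus "i \<le> g + v" using False gK nK K3 assms(1) by linarith
      qed
      show "inj_on (\<lambda>i. g + v - i) S" unfolding inj_on_def
      proof (intro ballI impI)
        fix a b assume "a \<in> S" "b \<in> S" "g + v - a = g + v - b"
        thus "a = b" using le[of a] le[of b] by linarith
      qed
      show "(\<lambda>i. g + v - i) ` S \<subseteq> {1..m} - {g}"
      proof
        fix x assume "x \<in> (\<lambda>i. g + v - i) ` S"
        then obtain i where i: "i \<in> S" "x = g + v - i" by blast
        have "i \<in> {1..n}" "i \<noteq> v" using i Ssub v by auto
        thus "x \<in> {1..m} - {g}" using i False gK nK mK K3 v assms(1) by auto
      qed
      show "\<forall>u\<in>S. \<forall>w\<in>S. path_power_adj k u w = path_power_adj k (g + v - u) (g + v - w)"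
      proof (intro ballI)
        fix u w assume "u \<in> S" "w \<in> S"
        thus "path_power_adj k u w = path_power_adj k (g + v - u) (g + v - w)"
          using le[of u] le[of w] unfolding path_power_adj_def by linarith
      qed
    qed
  qed
qed

end
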